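(* Let $F$ be a distribution on $[0,\infty)$ with unbounded support and let $\gamma\ge0$. Then $F\in\mathcal S(\gamma)$ if and only if the following three conditions hold: (a) $\gamma=\hat\gamma$; (b) for some $c\in[2,\infty)$, $\overline{F*F}(x)\sim c\,\overline{F}(x)$ as $x\to\infty$; (c) for every fixed real $y$, $$\liminf_{x\to\infty}\frac{\overline{F}(x-y)}{\overline{F}(x)}\ge e^{\gamma y}.$$
   Context: $\overline{F}(x)=F(x,\infty)$, positive for all $x$ (unbounded support). $\varphi(\gamma)=\int_0^\infty e^{\gamma x}F(dx)\in(0,\infty]$; $\hat\gamma=\sup\{\gamma:\varphi(\gamma)<\infty\}$. For $\gamma\ge0$, $F$ belongs to $\mathcal S(\gamma)$ if (i) $\varphi(\gamma)<\infty$; (ii) for every fixed $y$, $\overline{F}(x+y)/\overline{F}(x)\to e^{-\gamma y}$ as $x\to\infty$; (iii) $\overline{F*F}(x)\sim 2\varphi(\gamma)\overline{F}(x)$ as $x\to\infty$. *)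

theory Defs
  imports "HOL-Probability.Probability" "HOL-Library.Landau_Symbols"
begin

definition tail :: "real measure \<Rightarrow> real \<Rightarrow> real" where
  "tail F x = measure F {x<..}"

definition mgf :: "real measure \<Rightarrow> real \<Rightarrow> ennreal" where
  "mgf F \<gamma> = (\<integral>\<^sup>+ x. ennreal (exp (\<gamma> * x)) \<partial>F)"

definition gamma_hat :: "real measure \<Rightarrow> ereal" where
  "gamma_hat F = Sup {ereal \<gamma> | \<gamma>. mgf F \<gamma> < \<infinity>}"

definition class_S :: "real \<Rightarrow> real measure \<Rightarrow> bool" where
  "class_S \<gamma> F \<longleftrightarrow>
     mgf F \<gamma> < \<infinity> \<and>
     (\<forall>y::real. ((\<lambda>x. tail F (x + y) / tail F x) \<longlongrightarrow> exp (- \<gamma> * y)) at_top) \<and>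
     (\<lambda>x. tail (F \<star> F) x) \<sim>[at_top] (\<lambda>x. 2 * enn2real (mgf F \<gamma>) * tail F x)"

end

theory Submission
  imports Defs
begin

lemma set_shape:
  fixes k :: "real \<Rightarrow> real"
  assumes mono: "mono k" and cont: "continuous_on UNIV k" and t: "k x0 \<le> t"
  shows "{x. t < k x} = {} \<or> (\<exists>a\<ge>x0. {x. t < k x} = {a<..})"
proof (cases "{x. t < k x} = {}")
  case False
  define U where "U = {x. t < k x}"
  have lb: "x0 < x" if "x \<in> U" for x
  proof (rule ccontr)
    assume "\<not> x0 < x" then have "k x \<le> k x0" using mono by (auto simp: mono_def)
    with that t show False by (auto simp: U_def)
  qed
  have bdd: "bdd_below U" using lb by (meson bdd_belowI less_imp_le)
  have ne: "U \<noteq> {}" using False by (simp add: U_def)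
  define a where "a = Inf U"
  have ax0: "x0 \<le> a" unfolding a_def using ne lb by (meson cInf_greatest less_imp_le)
  have opn: "open U" unfolding U_def
    by (rule open_Collect_less) (auto intro: continuous_intros cont)
  have "a \<notin> U"
  proof
    assume "a \<in> U"
    then obtain e where e: "e > 0" "ball a e \<subseteq> U" using opn open_contains_ball by blast
    then have "a - e/2 \<in> U" by (auto simp: dist_real_def)
    then have "a \<le> a - e/2" unfolding a_def using bdd by (simp add: cInf_lower)
    with e show False by simp
  qed
  have "U = {a<..}"
  proof safe
    fix x assume "x \<in> U"
    then have "a \<le> x" unfolding a_def using bdd by (simp add: cInf_lower)
    moreover have "x \<noteq> a" using \<open>a \<notin> U\<close> \<open>x \<in> U\<close> by auto
    ultimately show "a < x" by simp
  next
    fix x assume "a < x"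
    then obtain u where "u \<in> U" "u < x" unfolding a_def using ne by (meson cInf_lessD)
    then show "x \<in> U" using mono unfolding U_def mono_def
      by (smt (verit) mem_Collect_eq)
  qed
  then show ?thesis using ax0 by (auto simp: U_def)
qed simp

lemma layer_cake:
  fixes k :: "real \<Rightarrow> real"
  assumes M: "sets M = sets borel" "sigma_finite_measure M"
    and k[measurable]: "k \<in> borel_measurable borel" and kpos: "\<And>x. 0 \<le> k x"
  shows "(\<integral>\<^sup>+x. ennreal (k x) \<partial>M) = (\<integral>\<^sup>+t. indicator {0..} t * emeasure M {x. t < k x} \<partial>lborel)"
proof -
  interpret M: sigma_finite_measure M by fact
  interpret pair_sigma_finite M lborel ..
  have sp: "space M = UNIV" using sets_eq_imp_space_eq[OF M(1)] by simp
  have [measurable_cong]: "sets M = sets borel" by fact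
  have 1: "ennreal (k x) = (\<integral>\<^sup>+t. indicator {0..<k x} t \<partial>lborel)" for x
    using kpos[of x] by simp
  have "(\<integral>\<^sup>+x. ennreal (k x) \<partial>M) = (\<integral>\<^sup>+x. \<integral>\<^sup>+t. indicator {p. 0 \<le> snd p \<and> snd p < k (fst p)} (x,t) \<partial>lborel \<partial>M)"
  proof (rule nn_integral_cong)
    fix x
    have "indicator {p. 0 \<le> snd p \<and> snd p < k (fst p)} (x,t) = (indicator {0..<k x} t :: ennreal)" for t
      by (auto simp: indicator_def)
    then show "ennreal (k x) = (\<integral>\<^sup>+t. indicator {p. 0 \<le> snd p \<and> snd p < k (fst p)} (x,t) \<partial>lborel)"
      using kpos[of x] by simp
  qed
  also have "\<dots> = (\<integral>\<^sup>+t. \<integral>\<^sup>+x. indicator {p. 0 \<le> snd p \<and> snd p < k (fst p)} (x,t) \<partial>M \<partial>lborel)"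
    by (rule Fubini'[symmetric]) measurable
  also have "\<dots> = (\<integral>\<^sup>+t. indicator {0..} t * emeasure M {x. t < k x} \<partial>lborel)"
  proof (rule nn_integral_cong)
    fix t :: real
    have "(\<integral>\<^sup>+x. indicator {p. 0 \<le> snd p \<and> snd p < k (fst p)} (x,t) \<partial>M)
        = (\<integral>\<^sup>+x. indicator {0..} t * indicator {x. t < k x} x \<partial>M)"
      by (auto intro!: nn_integral_cong simp: indicator_def)
    also have "\<dots> = indicator {0..} t * emeasure M {x. t < k x}"
      by (subst nn_integral_cmult) (auto simp: sp)
    finally show "(\<integral>\<^sup>+x. indicator {p. 0 \<le> snd p \<and> snd p < k (fst p)} (x,t) \<partial>M) = indicator {0..} t * emeasure M {x. t < k x}" .
  qed
  finally show ?thesis .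
qed

lemma meas_tailset:
  fixes k :: "real \<Rightarrow> real"
  assumes N: "sets N = sets borel" "finite_measure N" and k[measurable]: "k \<in> borel_measurable borel"
  shows "(\<lambda>t. emeasure N {x. t < k x}) \<in> borel_measurable borel"
proof -
  interpret N: finite_measure N by fact
  have [measurable_cong]: "sets N = sets borel" by fact
  have sp: "space N = UNIV" using sets_eq_imp_space_eq[OF N(1)] by simp
  have "(\<lambda>t. \<integral>\<^sup>+x. indicator {p. snd p < k (fst p)} (x,t) \<partial>N) \<in> borel_measurable borel"
    by measurable
  moreover have "(\<integral>\<^sup>+x. indicator {p. snd p < k (fst p)} (x,t) \<partial>N) = emeasure N {x. t < k x}" for t
  proof -
    have "(\<integral>\<^sup>+x. indicator {p. snd p < k (fst p)} (x,t) \<partial>N) = (\<integral>\<^sup>+x. indicator {x. t < k x} x \<partial>N)"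
      by (auto intro!: nn_integral_cong simp: indicator_def)
    then show ?thesis by (simp add: sp)
  qed
  ultimately show ?thesis by simp
qed

lemma cmp_upper:
  fixes k :: "real \<Rightarrow> real"
  assumes M: "sets M = sets borel" "prob_space M" and N: "sets N = sets borel" "finite_measure N"
    and mono: "mono k" and cont: "continuous_on UNIV k" and kpos: "\<And>x. 0 \<le> k x" and C: "0 \<le> C"
    and hyp: "\<And>a. a \<ge> x0 \<Longrightarrow> emeasure M {a<..} \<le> ennreal C * emeasure N {a<..}"
  shows "(\<integral>\<^sup>+x. ennreal (k x) \<partial>M) \<le> ennreal (k x0) + ennreal C * (\<integral>\<^sup>+x. ennreal (k x) \<partial>N)"
proof -
  interpret M: prob_space M by fact
  interpret N: finite_measure N by fact
  have km[measurable]: "k \<in> borel_measurable borel" using cont by (rule borel_measurable_continuous_onI)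
  have nm[measurable]: "(\<lambda>t. emeasure N {x. t < k x}) \<in> borel_measurable borel"
    by (rule meas_tailset[OF N km])
  have "(\<integral>\<^sup>+x. ennreal (k x) \<partial>M) = (\<integral>\<^sup>+t. indicator {0..} t * emeasure M {x. t < k x} \<partial>lborel)"
    by (rule layer_cake[OF M(1) _ km kpos]) unfold_locales
  also have "\<dots> \<le> (\<integral>\<^sup>+t. indicator {0..<k x0} t + ennreal C * (indicator {0..} t * emeasure N {x. t < k x}) \<partial>lborel)"
  proof (rule nn_integral_mono)
    fix t :: real
    consider "t < 0" | "0 \<le> t" "t < k x0" | "k x0 \<le> t" "0 \<le> t" by linarith
    then show "indicator {0..} t * emeasure M {x. t < k x} \<le> indicator {0..<k x0} t + ennreal C * (indicator {0..} t * emeasure N {x. t < k x})"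
    proof cases
      case 2
      then have "indicator {0..} t * emeasure M {x. t < k x} \<le> indicator {0..<k x0} t"
        using M.emeasure_le_1 by (simp add: indicator_def)
      then show ?thesis by (rule order_trans) simp
    next
      case 3
      from set_shape[OF mono cont 3(1)] have "indicator {0..} t * emeasure M {x. t < k x} \<le> ennreal C * (indicator {0..} t * emeasure N {x. t < k x})"
      proof
        assume "{x. t < k x} = {}" then show ?thesis by simp
      next
        assume "\<exists>a\<ge>x0. {x. t < k x} = {a<..}"
        then obtain a where "a \<ge> x0" "{x. t < k x} = {a<..}" by blast
        then show ?thesis using hyp[of a] 3 by (simp add: indicator_def)
      qed
      then show ?thesis by (rule order_trans) simp
    qed (simp add: indicator_def)
  qed
  also have "\<dots> = (\<integral>\<^sup>+t. indicator {0..<k x0} t \<partial>lborel) + ennreal C * (\<integral>\<^sup>+t. indicator {0..} t * emeasure N {x. t < k x} \<partial>lborel)"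
    by (subst nn_integral_add) (auto simp: nn_integral_cmult)
  also have "\<dots> = ennreal (k x0) + ennreal C * (\<integral>\<^sup>+x. ennreal (k x) \<partial>N)"
    using kpos[of x0] by (subst layer_cake[OF N(1) _ km kpos]) (auto intro: N.sigma_finite_measure)
  finally show ?thesis .
qed

lemma cmp_lower:
  fixes k :: "real \<Rightarrow> real"
  assumes M: "sets M = sets borel" "finite_measure M" and N: "sets N = sets borel" "prob_space N"
    and mono: "mono k" and cont: "continuous_on UNIV k" and kpos: "\<And>x. 0 \<le> k x" and C: "0 \<le> C"
    and hyp: "\<And>a. a \<ge> x0 \<Longrightarrow> ennreal C * emeasure N {a<..} \<le> emeasure M {a<..}"
  shows "ennreal C * (\<integral>\<^sup>+x. ennreal (k x) \<partial>N) \<le> (\<integral>\<^sup>+x. ennreal (k x) \<partial>M) + ennreal C * ennreal (k x0)"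
proof -
  interpret M: finite_measure M by fact
  interpret N: prob_space N by fact
  have km[measurable]: "k \<in> borel_measurable borel" using cont by (rule borel_measurable_continuous_onI)
  have nm[measurable]: "(\<lambda>t. emeasure M {x. t < k x}) \<in> borel_measurable borel"
    by (rule meas_tailset[OF M km])
  have nm2[measurable]: "(\<lambda>t. emeasure N {x. t < k x}) \<in> borel_measurable borel"
    by (rule meas_tailset[OF N(1) _ km]) unfold_locales
  have "ennreal C * (\<integral>\<^sup>+x. ennreal (k x) \<partial>N) = (\<integral>\<^sup>+t. ennreal C * (indicator {0..} t * emeasure N {x. t < k x}) \<partial>lborel)"
    by (subst layer_cake[OF N(1) _ km kpos]) (auto intro: N.sigma_finite_measure simp: nn_integral_cmult)
  also have "\<dots> \<le> (\<integral>\<^sup>+t. indicator {0..} t * emeasure M {x. t < k x} + ennreal C * indicator {0..<k x0} t \<partial>lborel)"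
  proof (rule nn_integral_mono)
    fix t :: real
    consider "t < 0" | "0 \<le> t" "t < k x0" | "k x0 \<le> t" "0 \<le> t" by linarith
    then show "ennreal C * (indicator {0..} t * emeasure N {x. t < k x}) \<le> indicator {0..} t * emeasure M {x. t < k x} + ennreal C * indicator {0..<k x0} t"
    proof cases
      case 2
      then have "ennreal C * (indicator {0..} t * emeasure N {x. t < k x}) \<le> ennreal C * indicator {0..<k x0} t"
        using mult_left_mono[OF N.emeasure_le_1[of "{x. t < k x}"], of "ennreal C"] by (auto simp: indicator_def)
      then show ?thesis by (rule order_trans) simp
    next
      case 3
      from set_shape[OF mono cont 3(1)] have "ennreal C * (indicator {0..} t * emeasure N {x. t < k x}) \<le> indicator {0..} t * emeasure M {x. t < k x}"
      proof
        assume "{x. t < k x} = {}" then show ?thesis by simp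
      next
        assume "\<exists>a\<ge>x0. {x. t < k x} = {a<..}"
        then obtain a where "a \<ge> x0" "{x. t < k x} = {a<..}" by blast
        then show ?thesis using hyp[of a] 3 by (simp add: indicator_def)
      qed
      then show ?thesis by (rule order_trans) simp
    qed (simp add: indicator_def)
  qed
  also have "\<dots> = (\<integral>\<^sup>+t. indicator {0..} t * emeasure M {x. t < k x} \<partial>lborel) + ennreal C * (\<integral>\<^sup>+t. indicator {0..<k x0} t \<partial>lborel)"
    by (subst nn_integral_add) (auto simp: nn_integral_cmult)
  also have "\<dots> = (\<integral>\<^sup>+x. ennreal (k x) \<partial>M) + ennreal C * ennreal (k x0)"
    using kpos[of x0] by (subst layer_cake[OF M(1) _ km kpos]) (auto intro: M.sigma_finite_measure)
  finally show ?thesis .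
qed

locale setting =
  fixes F :: "real measure"
  assumes P: "prob_space F" and S: "sets F = sets borel" and neg: "emeasure F {..<0} = 0"
    and pos: "\<forall>x. tail F x > 0"
begin

interpretation F: prob_space F by (rule P)

lemma finF: "finite_measure F" by unfold_locales

lemma spF: "space F = UNIV" using sets_eq_imp_space_eq[OF S] by simp

lemma SF[measurable_cong]: "sets F = sets borel" by (rule S)

lemma AE_nonneg: "AE x in F. 0 \<le> x"
proof (rule AE_I')
  show "{..<0::real} \<in> null_sets F" using neg by (auto simp: null_sets_def S)
qed (auto simp: spF)

lemma conv: "f \<in> borel_measurable borel \<Longrightarrow> (\<integral>\<^sup>+x. f x \<partial>(F \<star> F)) = (\<integral>\<^sup>+x. \<integral>\<^sup>+y. f (x + y) \<partial>F \<partial>F)"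
  by (rule nn_integral_convolution[OF finF finF S S])

lemma conv_le:
  assumes [measurable]: "f \<in> borel_measurable borel" "g \<in> borel_measurable borel" "h \<in> borel_measurable borel"
    and le: "\<And>x y. 0 \<le> x \<Longrightarrow> 0 \<le> y \<Longrightarrow> f (x + y) \<le> g x * h y"
  shows "(\<integral>\<^sup>+x. f x \<partial>(F \<star> F)) \<le> (\<integral>\<^sup>+x. g x \<partial>F) * (\<integral>\<^sup>+x. h x \<partial>F)"
proof -
  have "(\<integral>\<^sup>+x. f x \<partial>(F \<star> F)) = (\<integral>\<^sup>+x. \<integral>\<^sup>+y. f (x + y) \<partial>F \<partial>F)" by (rule conv) fact
  also have "\<dots> \<le> (\<integral>\<^sup>+x. g x * (\<integral>\<^sup>+y. h y \<partial>F) \<partial>F)"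
  proof (rule nn_integral_mono_AE)
    show "AE x in F. (\<integral>\<^sup>+y. f (x + y) \<partial>F) \<le> g x * (\<integral>\<^sup>+y. h y \<partial>F)"
      using AE_nonneg
    proof eventually_elim
      case (elim x)
      have "(\<integral>\<^sup>+y. f (x + y) \<partial>F) \<le> (\<integral>\<^sup>+y. g x * h y \<partial>F)"
        by (rule nn_integral_mono_AE, rule AE_mp[OF AE_nonneg]) (use le elim in auto)
      also have "\<dots> = g x * (\<integral>\<^sup>+y. h y \<partial>F)" by (rule nn_integral_cmult) simp
      finally show ?case .
    qed
  qed
  also have "\<dots> = (\<integral>\<^sup>+x. g x \<partial>F) * (\<integral>\<^sup>+x. h x \<partial>F)" by (rule nn_integral_multc) simp
  finally show ?thesis .
qed

lemma conv_ge:
  assumes [measurable]: "f \<in> borel_measurable borel" "g \<in> borel_measurable borel" "h \<in> borel_measurable borel"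
    and le: "\<And>x y. 0 \<le> x \<Longrightarrow> 0 \<le> y \<Longrightarrow> g x * h y \<le> f (x + y)"
  shows "(\<integral>\<^sup>+x. g x \<partial>F) * (\<integral>\<^sup>+x. h x \<partial>F) \<le> (\<integral>\<^sup>+x. f x \<partial>(F \<star> F))"
proof -
  have "(\<integral>\<^sup>+x. g x \<partial>F) * (\<integral>\<^sup>+x. h x \<partial>F) = (\<integral>\<^sup>+x. g x * (\<integral>\<^sup>+y. h y \<partial>F) \<partial>F)" by (rule nn_integral_multc[symmetric]) simp
  also have "\<dots> \<le> (\<integral>\<^sup>+x. \<integral>\<^sup>+y. f (x + y) \<partial>F \<partial>F)"
  proof (rule nn_integral_mono_AE)
    show "AE x in F. g x * (\<integral>\<^sup>+y. h y \<partial>F) \<le> (\<integral>\<^sup>+y. f (x + y) \<partial>F)"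
      using AE_nonneg
    proof eventually_elim
      case (elim x)
      have "g x * (\<integral>\<^sup>+y. h y \<partial>F) = (\<integral>\<^sup>+y. g x * h y \<partial>F)" by (rule nn_integral_cmult[symmetric]) simp
      also have "\<dots> \<le> (\<integral>\<^sup>+y. f (x + y) \<partial>F)"
        by (rule nn_integral_mono_AE, rule AE_mp[OF AE_nonneg]) (use le elim in auto)
      finally show ?case .
    qed
  qed
  also have "\<dots> = (\<integral>\<^sup>+x. f x \<partial>(F \<star> F))" by (rule conv[symmetric]) fact
  finally show ?thesis .
qed

lemma conv_eq:
  assumes [measurable]: "f \<in> borel_measurable borel" "g \<in> borel_measurable borel" "h \<in> borel_measurable borel"
    and le: "\<And>x y. 0 \<le> x \<Longrightarrow> 0 \<le> y \<Longrightarrow> f (x + y) = g x * h y"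
  shows "(\<integral>\<^sup>+x. f x \<partial>(F \<star> F)) = (\<integral>\<^sup>+x. g x \<partial>F) * (\<integral>\<^sup>+x. h x \<partial>F)"
  by (rule antisym; rule conv_le conv_ge) (auto simp: le)

lemma finG: "finite_measure (F \<star> F)" by (rule convolution_finite[OF finF finF S S])

lemma probG: "prob_space (F \<star> F)"
proof
  have "emeasure (F \<star> F) (space (F \<star> F)) = (\<integral>\<^sup>+x. 1 \<partial>(F \<star> F))" by simp
  also have "\<dots> = (\<integral>\<^sup>+x. 1 \<partial>F) * (\<integral>\<^sup>+x. 1 \<partial>F)" by (rule conv_eq) auto
  also have "\<dots> = 1" using F.emeasure_space_1 by (simp add: spF)
  finally show "emeasure (F \<star> F) (space (F \<star> F)) = 1" .
qed

lemma tailF: "emeasure F {a<..} = ennreal (tail F a)"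
  unfolding tail_def by (simp add: F.emeasure_eq_measure)

lemma tailG: "emeasure (F \<star> F) {a<..} = ennreal (tail (F \<star> F) a)"
  unfolding tail_def by (simp add: finite_measure.emeasure_eq_measure[OF finG])

lemma mgf_max: "mgf F s = (\<integral>\<^sup>+x. ennreal (exp (s * max x 0)) \<partial>F)"
  unfolding mgf_def by (rule nn_integral_cong_AE) (use AE_nonneg in \<open>eventually_elim, simp\<close>)

lemma mgfG: "mgf (F \<star> F) s = mgf F s * mgf F s"
  unfolding mgf_def by (rule conv_eq) (auto simp: distrib_left exp_add ennreal_mult)

lemma mgf_ge1: "s \<ge> 0 \<Longrightarrow> mgf F s \<ge> 1"
proof -
  assume s: "s \<ge> 0"
  have "(1::ennreal) = (\<integral>\<^sup>+x. 1 \<partial>F)" using F.emeasure_space_1 by (simp add: spF)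
  also have "\<dots> \<le> mgf F s" unfolding mgf_def
    by (rule nn_integral_mono_AE) (use AE_nonneg in \<open>eventually_elim, use s in simp\<close>)
  finally show ?thesis .
qed

lemma mgf_mono: "s \<le> s' \<Longrightarrow> mgf F s \<le> mgf F s'"
  unfolding mgf_def
  by (rule nn_integral_mono_AE) (use AE_nonneg in \<open>eventually_elim, simp add: mult_right_mono\<close>)

lemma gh_fin: "gamma_hat F = ereal g \<Longrightarrow> s < g \<Longrightarrow> mgf F s < \<infinity>"
proof -
  assume gh: "gamma_hat F = ereal g" and s: "s < g"
  then have "ereal s < Sup {ereal \<gamma> | \<gamma>. mgf F \<gamma> < \<infinity>}" unfolding gamma_hat_def by simp
  then obtain s' where "mgf F s' < \<infinity>" "s < s'" by (auto simp: less_Sup_iff)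
  then show ?thesis using mgf_mono[of s s'] by auto
qed

lemma gh_inf: "gamma_hat F = ereal g \<Longrightarrow> g < s \<Longrightarrow> mgf F s = \<infinity>"
proof (rule ccontr)
  assume gh: "gamma_hat F = ereal g" and s: "g < s" and "mgf F s \<noteq> \<infinity>"
  then have "ereal s \<le> Sup {ereal \<gamma> | \<gamma>. mgf F \<gamma> < \<infinity>}"
    by (intro Sup_upper) (auto simp: top.not_eq_extremum)
  with gh s show False unfolding gamma_hat_def by simp
qed

lemma mgf_approx:
  assumes g: "g > 0" and B: "\<And>s. 0 < s \<Longrightarrow> s < g \<Longrightarrow> mgf F s \<le> B"
  shows "mgf F g \<le> B"
proof -
  define sn where "sn n = g - g / (real n + 2)" for n :: nat
  have sn: "0 < sn n" "sn n < g" for n using g by (auto simp: sn_def field_simps add_pos_nonneg)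
  have inc: "sn n \<le> sn m" if "n \<le> m" for n m
    using that g unfolding sn_def by (auto intro!: divide_left_mono mult_pos_pos simp: field_simps)
  have lim: "sn \<longlonglongrightarrow> g"
  proof -
    have "(\<lambda>n. g / (2 + real n)) \<longlonglongrightarrow> 0"
      by (rule tendsto_divide_0[OF tendsto_const]) (rule filterlim_at_top_imp_at_infinity, rule filterlim_tendsto_add_at_top[OF tendsto_const filterlim_real_sequentially])
    then have "(\<lambda>n. g / (real n + 2)) \<longlonglongrightarrow> 0" by (simp add: add.commute)
    then show ?thesis unfolding sn_def using tendsto_diff[OF tendsto_const, of _ 0 sequentially g] by simp
  qed
  have "(\<lambda>n. \<integral>\<^sup>+x. ennreal (exp (sn n * max x 0)) \<partial>F) \<longlonglongrightarrow> (\<integral>\<^sup>+x. ennreal (exp (g * max x 0)) \<partial>F)"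
  proof (rule nn_integral_LIMSEQ)
    show "incseq (\<lambda>n x. ennreal (exp (sn n * max x 0)))"
      by (auto simp: incseq_def le_fun_def intro!: ennreal_leI mult_right_mono inc)
    show "(\<lambda>n. ennreal (exp (sn n * max x 0))) \<longlonglongrightarrow> ennreal (exp (g * max x 0))" for x
      by (intro tendsto_ennrealI tendsto_intros lim)
  qed simp
  then have "(\<lambda>n. mgf F (sn n)) \<longlonglongrightarrow> mgf F g" by (simp add: mgf_max)
  then show ?thesis by (rule LIMSEQ_le_const2) (use B sn in auto)
qed

lemma R1:
  assumes gh: "gamma_hat F = ereal g" and g0: "g \<ge> 0" and C: "C \<ge> 0"
    and ev: "eventually (\<lambda>a. tail (F \<star> F) a \<le> C * tail F a) at_top"
  shows "mgf F g < \<infinity>"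
proof (cases "g = 0")
  case True
  have "mgf F 0 = 1" unfolding mgf_def using F.emeasure_space_1 by (simp add: spF)
  then show ?thesis using True by simp
next
  case False
  then have gpos: "g > 0" using g0 by simp
  from ev obtain x1 where x1: "\<And>a. a \<ge> x1 \<Longrightarrow> tail (F \<star> F) a \<le> C * tail F a"
    by (auto simp: eventually_at_top_linorder)
  define x0 where "x0 = max x1 0"
  have x0: "x0 \<ge> 0" "\<And>a. a \<ge> x0 \<Longrightarrow> tail (F \<star> F) a \<le> C * tail F a" using x1 by (auto simp: x0_def)
  have "mgf F s \<le> ennreal (exp (g * x0) + C + 1)" if s: "0 < s" "s < g" for s
  proof -
    define k where "k z = exp (s * max z 0) - 1" for z
    have kpos: "0 \<le> k z" for z using s by (simp add: k_def)
    have kmono: "mono k" unfolding k_def mono_def using s by (auto intro!: mult_left_mono)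
    have kcont: "continuous_on UNIV k" unfolding k_def by (intro continuous_intros)
    have km[measurable]: "k \<in> borel_measurable borel" by (rule borel_measurable_continuous_onI[OF kcont])
    have kmF: "(\<lambda>x. ennreal (k x)) \<in> borel_measurable F" by measurable
    have kmG: "(\<lambda>x. ennreal (k x)) \<in> borel_measurable (F \<star> F)" unfolding measurable_convolution2 by measurable
    have "exp (s * x0) \<le> exp (g * x0)" using s x0 by (auto intro!: mult_right_mono)
    moreover have "k x0 = exp (s * x0) - 1" using x0 by (simp add: k_def)
    ultimately have kx0: "k x0 \<le> exp (g * x0)" by linarith
    have up: "(\<integral>\<^sup>+x. ennreal (k x) \<partial>(F \<star> F)) \<le> ennreal (k x0) + ennreal C * (\<integral>\<^sup>+x. ennreal (k x) \<partial>F)"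
    proof (rule cmp_upper[OF _ probG S finF kmono kcont kpos C])
      fix a assume "a \<ge> x0"
      then have "ennreal (tail (F \<star> F) a) \<le> ennreal (C * tail F a)" using x0(2)[of a] by (rule_tac ennreal_leI) 
      then show "emeasure (F \<star> F) {a<..} \<le> ennreal C * emeasure F {a<..}"
        using C pos[rule_format, of a] by (simp add: tailF tailG ennreal_mult)
    qed simp
    have e1: "ennreal (exp (s * max z 0)) = ennreal (k z) + 1" for z
    proof -
      have "exp (s * max z 0) \<ge> 1" using s by simp
      then have "ennreal (exp (s * max z 0)) = ennreal ((exp (s * max z 0) - 1) + 1)" by simp
      also have "\<dots> = ennreal (exp (s * max z 0) - 1) + 1"
        by (subst ennreal_plus) (use \<open>exp (s * max z 0) \<ge> 1\<close> in auto)
      finally show ?thesis unfolding k_def .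
    qed
    have mF: "mgf F s = (\<integral>\<^sup>+x. ennreal (k x) \<partial>F) + 1"
      unfolding mgf_max e1 using F.emeasure_space_1 by (subst nn_integral_add) (auto simp: kmF spF)
    have "(\<integral>\<^sup>+x. ennreal (exp (s * max x 0)) \<partial>(F \<star> F)) = mgf F s * mgf F s"
      unfolding mgf_max by (rule conv_eq) (auto simp: distrib_left exp_add ennreal_mult)
    moreover have "(\<integral>\<^sup>+x. ennreal (exp (s * max x 0)) \<partial>(F \<star> F)) = (\<integral>\<^sup>+x. ennreal (k x) \<partial>(F \<star> F)) + 1"
      unfolding e1 using prob_space.emeasure_space_1[OF probG]
      by (subst nn_integral_add) (auto simp: kmG)
    ultimately have mG: "mgf F s * mgf F s = (\<integral>\<^sup>+x. ennreal (k x) \<partial>(F \<star> F)) + 1" by simp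
    have fin: "mgf F s < \<infinity>" using gh_fin[OF gh s(2)] .
    then obtain a where a: "(\<integral>\<^sup>+x. ennreal (k x) \<partial>F) = ennreal a" "a \<ge> 0"
      using mF by (cases "(\<integral>\<^sup>+x. ennreal (k x) \<partial>F)") auto
    have "ennreal (k x0) + ennreal C * ennreal a < \<infinity>" by (simp add: ennreal_mult_less_top)
    then have "(\<integral>\<^sup>+x. ennreal (k x) \<partial>(F \<star> F)) < \<infinity>" using up a by (metis le_less_trans)
    then obtain b where b: "(\<integral>\<^sup>+x. ennreal (k x) \<partial>(F \<star> F)) = ennreal b" "b \<ge> 0"
      by (cases "(\<integral>\<^sup>+x. ennreal (k x) \<partial>(F \<star> F))") auto
    have "ennreal ((a+1)*(a+1)) = ennreal (a+1) * ennreal (a + 1)"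
      using a(2) by (intro ennreal_mult) auto
    also have "\<dots> = (ennreal a + 1) * (ennreal a + 1)" using a(2) by (subst ennreal_plus) auto
    also have "\<dots> = ennreal b + 1" using mG mF a b by metis
    also have "\<dots> = ennreal (b + 1)" using b(2) by (subst ennreal_plus) auto
    finally have eq: "(a+1)*(a+1) = b + 1" using a b by (subst (asm) ennreal_inj) auto
    have "ennreal (k x0 + C * a) = ennreal (k x0) + ennreal C * ennreal a"
      using kpos[of x0] C a(2) by (subst ennreal_plus) (auto simp: ennreal_mult)
    then have "ennreal b \<le> ennreal (k x0 + C * a)" using up a b by simp
    then have "b \<le> k x0 + C * a" using kpos[of x0] C a by (subst (asm) ennreal_le_iff) auto
    moreover have "(exp (g*x0) + C + 1) * (a + 1) = exp (g*x0) * a + exp (g*x0) + C * a + C + a + 1"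
      by (simp add: algebra_simps)
    moreover have "0 \<le> exp (g*x0) * a" using a(2) by simp
    ultimately have "(a+1)*(a+1) \<le> (exp (g*x0) + C + 1) * (a + 1)" using eq kx0 C a(2) by linarith
    moreover have "0 < a + 1" using a(2) by simp
    ultimately have "a + 1 \<le> exp (g*x0) + C + 1" using mult_right_le_imp_le by blast
    then have "ennreal (a + 1) \<le> ennreal (exp (g*x0) + C + 1)" by (rule ennreal_leI)
    moreover have "ennreal (a + 1) = mgf F s" using mF a by (subst ennreal_plus) auto
    ultimately show ?thesis by simp
  qed
  then have "mgf F g \<le> ennreal (exp (g * x0) + C + 1)" by (rule mgf_approx[OF gpos])
  then show ?thesis by (simp add: le_less_trans)
qed

end

lemma mono_k:
  assumes "g \<ge> 0" "l \<ge> 0" "T \<ge> 0"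
  shows "mono (\<lambda>z::real. exp (g*z) * (exp (l * min (max z 0) T) - 1))"
proof (rule monoI)
  fix z w :: real assume "z \<le> w"
  have "min (max z 0) T \<le> min (max w 0) T" using \<open>z \<le> w\<close> by linarith
  then have "exp (l * min (max z 0) T) \<le> exp (l * min (max w 0) T)" using assms by (simp add: mult_left_mono)
  moreover have "exp (g*z) \<le> exp (g*w)" using assms \<open>z \<le> w\<close> by (simp add: mult_left_mono)
  moreover have "0 \<le> exp (l * min (max z 0) T) - 1" using assms by simp
  ultimately show "exp (g*z) * (exp (l * min (max z 0) T) - 1) \<le> exp (g*w) * (exp (l * min (max w 0) T) - 1)"
    by (intro mult_mono) auto
qed

lemma cont_k: "continuous_on UNIV (\<lambda>z::real. exp (g*z) * (exp (l * min (max z 0) T) - 1))"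
  by (intro continuous_intros)

lemma pos_k: "l \<ge> 0 \<Longrightarrow> T \<ge> 0 \<Longrightarrow> 0 \<le> exp (g*(z::real)) * (exp (l * min (max z 0) T) - 1)"
proof -
  assume "l \<ge> 0" "T \<ge> 0"
  moreover have "0 \<le> min (max z 0) T" using \<open>T \<ge> 0\<close> by simp
  ultimately have "0 \<le> l * min (max z 0) T" by (intro mult_nonneg_nonneg)
  then show ?thesis by simp
qed

context setting
begin

interpretation F: prob_space F by (rule P)

lemma key_ineq:
  assumes g0: "g \<ge> 0" and l: "l \<ge> 0" and T: "T \<ge> 0" and fin: "mgf F g = ennreal p" and c': "c' \<ge> 0" and x0: "x0 \<ge> 0"
    and hyp: "\<And>a. a \<ge> x0 \<Longrightarrow> c' * tail F a \<le> tail (F \<star> F) a"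
    and D: "(\<integral>\<^sup>+z. ennreal (exp (g*z) * (exp (l * min (max z 0) T) - 1)) \<partial>F) = ennreal d" "d \<ge> 0"
  shows "c' * d \<le> 2 * p * d + d * d + c' * (exp (g*x0) * (exp (l * x0) - 1))"
proof -
  define k where "k z = exp (g*z) * (exp (l * min (max z 0) T) - 1)" for z
  define h where "h z = exp (g*z) * exp (l * min (max z 0) T)" for z
  have kpos: "0 \<le> k z" for z using pos_k[OF l T] by (simp add: k_def)
  have Dk: "(\<integral>\<^sup>+z. ennreal (k z) \<partial>F) = ennreal d" using D(1) unfolding k_def .
  have km[measurable]: "k \<in> borel_measurable borel" unfolding k_def by measurable
  have hm[measurable]: "h \<in> borel_measurable borel" unfolding h_def by measurable
  have kmF: "(\<lambda>x. ennreal (k x)) \<in> borel_measurable F" by measurable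
  have kmG: "(\<lambda>x. ennreal (k x)) \<in> borel_measurable (F \<star> F)" unfolding measurable_convolution2 by measurable
  have eG: "(\<lambda>x. ennreal (exp (g*x))) \<in> borel_measurable (F \<star> F)" unfolding measurable_convolution2 by measurable
  have hk: "ennreal (h z) = ennreal (exp (g*z)) + ennreal (k z)" for z
    unfolding h_def k_def using l T by (subst ennreal_plus[symmetric]) (auto simp: algebra_simps)
  have p0: "p \<ge> 0"
  proof -
    have "mgf F g \<ge> 1" by (rule mgf_ge1[OF g0])
    then show ?thesis using fin by (cases "p \<ge> 0") (auto simp: ennreal_neg)
  qed
  have hF: "(\<integral>\<^sup>+z. ennreal (h z) \<partial>F) = ennreal (p + d)"
    unfolding hk using fin Dk D(2) by (subst nn_integral_add) (auto simp: kmF mgf_def ennreal_plus p0)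
  have hG: "(\<integral>\<^sup>+z. ennreal (h z) \<partial>(F \<star> F)) = ennreal (p * p) + (\<integral>\<^sup>+z. ennreal (k z) \<partial>(F \<star> F))"
    unfolding hk using mgfG[of g] fin p0 by (subst nn_integral_add) (auto simp: kmG eG mgf_def ennreal_mult)
  have "(\<integral>\<^sup>+z. ennreal (h z) \<partial>(F \<star> F)) \<le> (\<integral>\<^sup>+z. ennreal (h z) \<partial>F) * (\<integral>\<^sup>+z. ennreal (h z) \<partial>F)"
  proof (rule conv_le)
    fix x y :: real assume "0 \<le> x" "0 \<le> y"
    have "min (max (x+y) 0) T \<le> min (max x 0) T + min (max y 0) T" using \<open>0 \<le> x\<close> \<open>0 \<le> y\<close> T by linarith
    then have "exp (l * min (max (x+y) 0) T) \<le> exp (l * min (max x 0) T) * exp (l * min (max y 0) T)"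
      using l by (simp add: exp_add[symmetric] distrib_left[symmetric] mult_left_mono)
    then have "h (x+y) \<le> h x * h y" unfolding h_def
      by (simp add: distrib_left exp_add algebra_simps mult_left_mono)
    then show "ennreal (h (x + y)) \<le> ennreal (h x) * ennreal (h y)"
      by (simp add: ennreal_mult[symmetric] h_def ennreal_leI)
  qed measurable
  then have up: "ennreal (p * p) + (\<integral>\<^sup>+z. ennreal (k z) \<partial>(F \<star> F)) \<le> ennreal ((p + d) * (p + d))"
    using hF hG p0 D(2) by (simp add: ennreal_mult)
  then obtain dg where dg: "(\<integral>\<^sup>+z. ennreal (k z) \<partial>(F \<star> F)) = ennreal dg" "dg \<ge> 0"
    by (cases "(\<integral>\<^sup>+z. ennreal (k z) \<partial>(F \<star> F))") (auto simp: top_add top_unique)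
  have "ennreal (p * p + dg) \<le> ennreal ((p + d) * (p + d))" using up dg p0 by (simp add: ennreal_plus)
  then have up': "p * p + dg \<le> (p + d) * (p + d)" using p0 D(2) by (subst (asm) ennreal_le_iff) auto
  have lo: "ennreal c' * (\<integral>\<^sup>+x. ennreal (k x) \<partial>F) \<le> (\<integral>\<^sup>+x. ennreal (k x) \<partial>(F \<star> F)) + ennreal c' * ennreal (k x0)"
  proof (rule cmp_lower[OF _ finG S P])
    show "mono k" unfolding k_def by (rule mono_k[OF g0 l T])
    show "continuous_on UNIV k" unfolding k_def by (rule cont_k)
    fix a assume "a \<ge> x0"
    then have "ennreal (c' * tail F a) \<le> ennreal (tail (F \<star> F) a)" using hyp[of a] by (rule_tac ennreal_leI)
    then show "ennreal c' * emeasure F {a<..} \<le> emeasure (F \<star> F) {a<..}"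
      using c' pos[rule_format, of a] by (simp add: tailF tailG ennreal_mult)
  qed (auto simp: kpos c')
  have kx0: "k x0 \<le> exp (g*x0) * (exp (l * x0) - 1)"
  proof -
    have "min (max x0 0) T \<le> x0" using x0 by linarith
    then have "exp (l * min (max x0 0) T) \<le> exp (l * x0)" using l by (simp add: mult_left_mono)
    then show ?thesis unfolding k_def by (intro mult_left_mono) auto
  qed
  have "ennreal (c' * d) \<le> ennreal (dg + c' * k x0)"
    using lo dg Dk D(2) c' kpos[of x0] by (simp add: ennreal_mult ennreal_plus)
  then have "c' * d \<le> dg + c' * k x0" using kpos[of x0] c' dg by (subst (asm) ennreal_le_iff) auto
  moreover have "c' * k x0 \<le> c' * (exp (g*x0) * (exp (l * x0) - 1))" using kx0 c' by (rule mult_left_mono)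
  moreover have "(p + d) * (p + d) = p * p + 2 * p * d + d * d" by (simp add: algebra_simps)
  ultimately show ?thesis using up' by linarith
qed

lemma R2:
  assumes gh: "gamma_hat F = ereal g" and g0: "g \<ge> 0" and fin: "mgf F g = ennreal p"
    and ev: "eventually (\<lambda>a. c' * tail F a \<le> tail (F \<star> F) a) at_top" and c': "c' \<ge> 0"
  shows "c' \<le> 2 * p"
proof (rule ccontr)
  assume "\<not> c' \<le> 2 * p"
  define e where "e = c' - 2 * p"
  have e: "e > 0" using \<open>\<not> c' \<le> 2 * p\<close> by (simp add: e_def)
  have p0: "p \<ge> 0"
  proof -
    have "mgf F g \<ge> 1" by (rule mgf_ge1[OF g0])
    then show ?thesis using fin by (cases "p \<ge> 0") (auto simp: ennreal_neg)
  qed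
  from ev obtain x1 where x1: "\<And>a. a \<ge> x1 \<Longrightarrow> c' * tail F a \<le> tail (F \<star> F) a"
    by (auto simp: eventually_at_top_linorder)
  define x0 where "x0 = max x1 0"
  have x0: "x0 \<ge> 0" "\<And>a. a \<ge> x0 \<Longrightarrow> c' * tail F a \<le> tail (F \<star> F) a" using x1 by (auto simp: x0_def)
  have t1: "((\<lambda>l. (exp l - 1) * (p + e/4)) \<longlongrightarrow> 0) (at_right 0)"
    using tendsto_intros(1-100) by (auto intro!: tendsto_eq_intros)
  have t2: "((\<lambda>l. c' * (exp (g*x0) * (exp (l * x0) - 1))) \<longlongrightarrow> 0) (at_right 0)"
    by (auto intro!: tendsto_eq_intros)
  have "eventually (\<lambda>l. (exp l - 1) * (p + e/4) < e/4) (at_right 0)"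
    by (rule order_tendstoD(2)[OF t1]) (use e in simp)
  moreover have "eventually (\<lambda>l. c' * (exp (g*x0) * (exp (l * x0) - 1)) < e*e/8) (at_right 0)"
    by (rule order_tendstoD(2)[OF t2]) (use e in simp)
  moreover have "eventually (\<lambda>l. 0 < l) (at_right (0::real))" by (rule eventually_at_right_less)
  ultimately have "eventually (\<lambda>l. (exp l - 1) * (p + e/4) < e/4 \<and> c' * (exp (g*x0) * (exp (l * x0) - 1)) < e*e/8 \<and> 0 < l) (at_right 0)"
    by eventually_elim auto
  then obtain l where l: "(exp l - 1) * (p + e/4) < e/4" "c' * (exp (g*x0) * (exp (l * x0) - 1)) < e*e/8" "0 < l"
    using eventually_happens'[of "at_right (0::real)"] by auto
  define k where "k n z = exp (g*z) * (exp (l * min (max z 0) (real n)) - 1)" for n :: nat and z :: real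
  have kpos: "0 \<le> k n z" for n z unfolding k_def by (rule pos_k) (use l in auto)
  have km[measurable]: "k n \<in> borel_measurable borel" for n unfolding k_def by measurable
  define D where "D n = (\<integral>\<^sup>+z. ennreal (k n z) \<partial>F)" for n
  have Dfin: "D n < \<infinity>" for n
  proof -
    have "D n \<le> (\<integral>\<^sup>+z. ennreal (exp (g*z)) * ennreal (exp (l * real n) - 1) \<partial>F)"
      unfolding D_def
    proof (rule nn_integral_mono)
      fix z
      have "min (max z 0) (real n) \<le> real n" by simp
      then have "exp (l * min (max z 0) (real n)) \<le> exp (l * real n)" using l by (simp add: mult_left_mono)
      then have "k n z \<le> exp (g*z) * (exp (l * real n) - 1)" unfolding k_def by (intro mult_left_mono) auto
      then have "ennreal (k n z) \<le> ennreal (exp (g*z) * (exp (l * real n) - 1))" by (rule ennreal_leI)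
      then show "ennreal (k n z) \<le> ennreal (exp (g*z)) * ennreal (exp (l * real n) - 1)"
        by (subst (asm) ennreal_mult') auto
    qed
    also have "\<dots> = mgf F g * ennreal (exp (l * real n) - 1)"
      unfolding mgf_def by (rule nn_integral_multc) simp
    finally have "D n \<le> ennreal p * ennreal (exp (l * real n) - 1)" using fin by simp
    moreover have "ennreal p * ennreal (exp (l * real n) - 1) < \<infinity>" by (simp add: ennreal_mult_less_top)
    ultimately show ?thesis by (rule le_less_trans)
  qed
  define d where "d n = enn2real (D n)" for n
  have Dd: "D n = ennreal (d n)" and d0: "d n \<ge> 0" for n
    using Dfin[of n] unfolding d_def by (auto simp: less_top)
  have key: "c' * d n \<le> 2 * p * d n + d n * d n + c' * (exp (g*x0) * (exp (l * x0) - 1))" for n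
    by (rule key_ineq[OF g0 _ _ fin c' x0(1) x0(2), where T="real n"]) (use l Dd d0 in \<open>auto simp: D_def k_def\<close>)
  have dzero: "d 0 = 0"
  proof -
    have "k 0 z = 0" for z by (simp add: k_def)
    then have "D 0 = 0" by (simp add: D_def)
    then show ?thesis by (simp add: d_def)
  qed
  have step: "d (Suc n) \<le> exp l * d n + (exp l - 1) * p" for n
  proof -
    have "D (Suc n) \<le> (\<integral>\<^sup>+z. ennreal (exp l) * ennreal (k n z) + ennreal (exp l - 1) * ennreal (exp (g*z)) \<partial>F)"
      unfolding D_def
    proof (rule nn_integral_mono)
      fix z
      have "min (max z 0) (real (Suc n)) \<le> min (max z 0) (real n) + 1" by simp
      then have "l * min (max z 0) (real (Suc n)) \<le> l * (min (max z 0) (real n) + 1)"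
        using l by (intro mult_left_mono) auto
      then have "exp (l * min (max z 0) (real (Suc n))) \<le> exp (l + l * min (max z 0) (real n))"
        by (simp add: algebra_simps)
      then have "exp (l * min (max z 0) (real (Suc n))) - 1 \<le> exp l * (exp (l * min (max z 0) (real n)) - 1) + (exp l - 1)"
        by (simp add: exp_add algebra_simps)
      then have "k (Suc n) z \<le> exp l * k n z + (exp l - 1) * exp (g*z)"
        unfolding k_def by (smt (verit, best) exp_gt_zero mult_left_mono distrib_left mult.commute mult.left_commute)
      then show "ennreal (k (Suc n) z) \<le> ennreal (exp l) * ennreal (k n z) + ennreal (exp l - 1) * ennreal (exp (g*z))"
        using kpos[of n z] l by (simp add: ennreal_mult[symmetric] ennreal_plus[symmetric] ennreal_leI del: ennreal_plus)
    qed
    also have "\<dots> = ennreal (exp l) * D n + ennreal (exp l - 1) * mgf F g"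
      unfolding D_def mgf_def by (subst nn_integral_add) (auto simp: nn_integral_cmult)
    also have "\<dots> = ennreal (exp l * d n + (exp l - 1) * p)"
      using Dd[of n] fin l d0[of n] p0 by (simp add: ennreal_mult[symmetric] ennreal_plus)
    finally have "ennreal (d (Suc n)) \<le> ennreal (exp l * d n + (exp l - 1) * p)" using Dd[of "Suc n"] by simp
    moreover have nn: "0 \<le> exp l * d n + (exp l - 1) * p" using d0[of n] l p0 by (intro add_nonneg_nonneg mult_nonneg_nonneg) auto
    ultimately show ?thesis using ennreal_le_iff[OF nn] by simp
  qed
  have unb: "\<exists>n. e/4 \<le> d n"
  proof (rule ccontr)
    assume "\<not> (\<exists>n. e/4 \<le> d n)"
    then have bnd: "d n < e/4" for n by (simp add: not_le)
    define kinf where "kinf z = exp (g*z) * (exp (l * max z 0) - 1)" for z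
    have "(\<lambda>n. D n) \<longlonglongrightarrow> (\<integral>\<^sup>+z. ennreal (kinf z) \<partial>F)"
      unfolding D_def
    proof (rule nn_integral_LIMSEQ)
      show "incseq (\<lambda>n z. ennreal (k n z))"
      proof (rule incseq_SucI, rule le_funI)
        fix n z
        have "min (max z 0) (real n) \<le> min (max z 0) (real (Suc n))" by simp
        then have "exp (l * min (max z 0) (real n)) \<le> exp (l * min (max z 0) (real (Suc n)))"
          using l by (simp add: mult_left_mono)
        then have "k n z \<le> k (Suc n) z" unfolding k_def by (intro mult_left_mono) auto
        then show "ennreal (k n z) \<le> ennreal (k (Suc n) z)" by (rule ennreal_leI)
      qed
      fix z
      show "(\<lambda>n. ennreal (k n z)) \<longlonglongrightarrow> ennreal (kinf z)"
      proof (rule tendsto_eventually)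
        have "eventually (\<lambda>n. max z 0 \<le> real n) sequentially"
        proof -
          obtain N :: nat where "max z 0 \<le> real N" using real_arch_simple by blast
          then show ?thesis unfolding eventually_sequentially
            by (intro exI[of _ N]) (auto intro: order_trans)
        qed
        then show "eventually (\<lambda>n. ennreal (k n z) = ennreal (kinf z)) sequentially"
          by eventually_elim (simp add: k_def kinf_def)
      qed
    qed simp
    then have "(\<integral>\<^sup>+z. ennreal (kinf z) \<partial>F) \<le> ennreal (e/4)"
    proof (rule LIMSEQ_le_const2)
      show "\<exists>N. \<forall>n\<ge>N. D n \<le> ennreal (e/4)"
        using bnd Dd by (intro exI[of _ 0] allI impI) (simp add: ennreal_leI less_imp_le)
    qed
    moreover have "mgf F (g + l) = mgf F g + (\<integral>\<^sup>+z. ennreal (kinf z) \<partial>F)"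
    proof -
      have "mgf F (g + l) = (\<integral>\<^sup>+z. ennreal (exp (g*z)) + ennreal (kinf z) \<partial>F)"
        unfolding mgf_def
      proof (rule nn_integral_cong_AE)
        show "AE z in F. ennreal (exp ((g + l) * z)) = ennreal (exp (g*z)) + ennreal (kinf z)"
          using AE_nonneg
        proof eventually_elim
          case (elim z)
          have "0 \<le> kinf z" unfolding kinf_def using l elim by simp
          moreover have "exp ((g + l) * z) = exp (g*z) + kinf z"
            unfolding kinf_def using elim by (simp add: algebra_simps exp_add)
          ultimately show ?case by (simp add: ennreal_plus)
        qed
      qed
      also have "\<dots> = mgf F g + (\<integral>\<^sup>+z. ennreal (kinf z) \<partial>F)"
        unfolding mgf_def by (subst nn_integral_add) (auto simp: kinf_def)
      finally show ?thesis .
    qed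
    ultimately have "mgf F (g + l) \<le> ennreal p + ennreal (e/4)" using fin
      by (metis add_left_mono)
    moreover have "ennreal p + ennreal (e/4) < \<infinity>" by (simp add: less_top[symmetric])
    ultimately have "mgf F (g + l) < \<infinity>" by (rule le_less_trans)
    moreover have "mgf F (g + l) = \<infinity>" by (rule gh_inf[OF gh]) (use l in simp)
    ultimately show False by simp
  qed
  define n where "n = (LEAST n. e/4 \<le> d n)"
  have dn: "e/4 \<le> d n" unfolding n_def using unb by (metis LeastI)
  have "n \<noteq> 0"
  proof
    assume "n = 0" then show False using dn dzero e by simp
  qed
  then obtain m where m: "n = Suc m" by (cases n) auto
  have dm: "d m < e/4" using not_less_Least[of m "\<lambda>n. e/4 \<le> d n"] m unfolding n_def by simp
  have "d n \<le> exp l * d m + (exp l - 1) * p" using step[of m] m by simp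
  also have "\<dots> = d m + (exp l - 1) * (d m + p)" by (simp add: algebra_simps)
  also have "\<dots> \<le> d m + (exp l - 1) * (p + e/4)"
    using dm l by (intro add_left_mono mult_left_mono) auto
  finally have "d n \<le> d m + (exp l - 1) * (p + e/4)" .
  then have dn2: "d n \<le> e/2" using dm l(1) by linarith
  have "e/4 * (e/2) \<le> d n * (e - d n)" using dn dn2 e by (intro mult_mono) auto
  moreover have "c' * d n = e * d n + 2 * p * d n" by (simp add: e_def algebra_simps)
  moreover have "d n * (e - d n) = e * d n - d n * d n" by (simp add: algebra_simps)
  moreover have "e/4 * (e/2) = e * e / 8" by simp
  ultimately show False using l(2) key[of n] by linarith
qed

end

context setting
begin

interpretation F: prob_space F by (rule P)
interpretation FF: pair_sigma_finite F F ..

lemma tail_mono: "a \<le> b \<Longrightarrow> tail F b \<le> tail F a"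
  unfolding tail_def by (rule F.finite_measure_mono) (auto simp: S)

lemma split_lower:
  fixes A x :: real assumes Ax: "2 * A < x"
  shows "2 * (\<integral>\<^sup>+y. indicator {..A} y * emeasure F {x - y<..} \<partial>F) \<le> emeasure (F \<star> F) {x<..}"
proof -
  have ind: "(\<integral>\<^sup>+v. indicator {x<..} (u + v) \<partial>F) = emeasure F {x - u<..}" for u
  proof -
    have "(\<integral>\<^sup>+v. indicator {x<..} (u + v) \<partial>F) = (\<integral>\<^sup>+v. indicator {x - u<..} v \<partial>F)"
      by (auto intro!: nn_integral_cong simp: indicator_def)
    then show ?thesis by (simp add: S)
  qed
  have "emeasure (F \<star> F) {x<..} = (\<integral>\<^sup>+z. indicator {x<..} z \<partial>(F \<star> F))" by simp
  also have "\<dots> = (\<integral>\<^sup>+u. \<integral>\<^sup>+v. indicator {x<..} (u + v) \<partial>F \<partial>F)" by (rule conv) simp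
  also have "\<dots> \<ge> (\<integral>\<^sup>+u. \<integral>\<^sup>+v. indicator {..A} v * indicator {x<..} (u + v) + indicator {..A} u * indicator {x<..} (u + v) \<partial>F \<partial>F)"
    using Ax by (intro nn_integral_mono) (auto simp: indicator_def)
  also have "(\<integral>\<^sup>+u. \<integral>\<^sup>+v. indicator {..A} v * indicator {x<..} (u + v) + indicator {..A} u * indicator {x<..} (u + v) \<partial>F \<partial>F)
      = (\<integral>\<^sup>+u. \<integral>\<^sup>+v. indicator {..A} v * indicator {x<..} (u + v) \<partial>F \<partial>F) + (\<integral>\<^sup>+u. \<integral>\<^sup>+v. indicator {..A} u * indicator {x<..} (u + v) \<partial>F \<partial>F)"
  proof -
    have m1: "(\<lambda>u. \<integral>\<^sup>+v. indicator {..A} v * indicator {x<..} (u + v) \<partial>F) \<in> borel_measurable F"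
      by (rule F.borel_measurable_nn_integral) measurable
    have m2: "(\<lambda>u. \<integral>\<^sup>+v. indicator {..A} u * indicator {x<..} (u + v) \<partial>F) \<in> borel_measurable F"
      by (rule F.borel_measurable_nn_integral) measurable
    show ?thesis
      by (subst nn_integral_add[symmetric, OF m1 m2]) (rule nn_integral_cong, rule nn_integral_add, measurable)
  qed
  also have "(\<integral>\<^sup>+u. \<integral>\<^sup>+v. indicator {..A} v * indicator {x<..} (u + v) \<partial>F \<partial>F)
      = (\<integral>\<^sup>+v. \<integral>\<^sup>+u. indicator {..A} v * indicator {x<..} (u + v) \<partial>F \<partial>F)"
    by (rule FF.Fubini'[symmetric]) measurable
  also have "\<dots> = (\<integral>\<^sup>+y. indicator {..A} y * emeasure F {x - y<..} \<partial>F)"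
    by (rule nn_integral_cong) (simp add: nn_integral_cmult nn_integral_multc ind[symmetric] add.commute)
  also have "(\<integral>\<^sup>+u. \<integral>\<^sup>+v. indicator {..A} u * indicator {x<..} (u + v) \<partial>F \<partial>F)
      = (\<integral>\<^sup>+y. indicator {..A} y * emeasure F {x - y<..} \<partial>F)"
    by (rule nn_integral_cong) (simp add: nn_integral_cmult ind)
  finally show ?thesis by (simp add: mult_2)
qed

lemma R3:
  assumes g0: "g \<ge> 0"
    and L: "\<And>y. ((\<lambda>x. tail F (x + y) / tail F x) \<longlongrightarrow> exp (- g * y)) at_top"
    and rat: "((\<lambda>x. tail (F \<star> F) x / tail F x) \<longlongrightarrow> c) at_top"
  shows "2 * mgf F g \<le> ennreal c"
proof -
  have fA: "2 * (\<integral>\<^sup>+y. indicator {..real A} y * ennreal (exp (g*y)) \<partial>F) \<le> ennreal c" for A :: nat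
  proof -
    define f where "f n y = 2 * (indicator {..real A} y * ennreal (tail F (real n - y) / tail F (real n)))" for n :: nat and y
    have tm[measurable]: "(\<lambda>y. tail F (real n - y)) \<in> borel_measurable borel" for n
      by (rule borel_measurable_mono) (auto simp: mono_def intro: tail_mono)
    have fm: "f n \<in> borel_measurable F" for n
      unfolding f_def by measurable
    have lim: "(\<lambda>n. f n y) \<longlonglongrightarrow> 2 * (indicator {..real A} y * ennreal (exp (g*y)))" for y
    proof -
      have "((\<lambda>n. tail F (real n + - y) / tail F (real n)) \<longlongrightarrow> exp (- g * - y)) sequentially"
        by (rule filterlim_compose[OF L[of "-y"] filterlim_real_sequentially])
      then have "((\<lambda>n. tail F (real n - y) / tail F (real n)) \<longlongrightarrow> exp (g * y)) sequentially" by simp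
      then have "((\<lambda>n. ennreal (tail F (real n - y) / tail F (real n))) \<longlongrightarrow> ennreal (exp (g * y))) sequentially"
        by (rule tendsto_ennrealI)
      then have "(\<lambda>n. indicator {..real A} y * ennreal (tail F (real n - y) / tail F (real n)))
          \<longlonglongrightarrow> indicator {..real A} y * ennreal (exp (g * y))"
        by (rule ennreal_tendsto_cmult[rotated]) (simp add: indicator_def)
      then show ?thesis unfolding f_def
        by (rule ennreal_tendsto_cmult[rotated]) simp
    qed
    have le: "(\<integral>\<^sup>+y. f n y \<partial>F) \<le> ennreal (tail (F \<star> F) (real n) / tail F (real n))" if n: "2 * real A < real n" for n
    proof -
      have tp: "tail F (real n) > 0" using pos by simp
      have "ennreal (tail F (real n)) * (\<integral>\<^sup>+y. f n y \<partial>F) = (\<integral>\<^sup>+y. ennreal (tail F (real n)) * f n y \<partial>F)"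
        by (rule nn_integral_cmult[symmetric]) (rule fm)
      also have "\<dots> = (\<integral>\<^sup>+y. 2 * (indicator {..real A} y * emeasure F {real n - y<..}) \<partial>F)"
      proof (rule nn_integral_cong)
        fix y
        have "ennreal (tail F (real n)) * ennreal (tail F (real n - y) / tail F (real n)) = ennreal (tail F (real n - y))"
          using tp pos[rule_format, of "real n - y"] by (simp add: ennreal_mult[symmetric])
        then show "ennreal (tail F (real n)) * f n y = 2 * (indicator {..real A} y * emeasure F {real n - y<..})"
          unfolding f_def tailF by (simp add: indicator_def algebra_simps)
      qed
      also have "\<dots> = 2 * (\<integral>\<^sup>+y. indicator {..real A} y * emeasure F {real n - y<..} \<partial>F)"
        unfolding tailF by (rule nn_integral_cmult) measurable
      also have "\<dots> \<le> emeasure (F \<star> F) {real n<..}" by (rule split_lower) (use n in simp)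
      also have "\<dots> = ennreal (tail F (real n)) * ennreal (tail (F \<star> F) (real n) / tail F (real n))"
        using tp tailG[of "real n"] pos[rule_format, of "real n"] tailG
        by (simp add: ennreal_mult[symmetric] tail_def measure_nonneg)
      finally show ?thesis using tp by (subst (asm) ennreal_mult_le_mult_iff) auto
    qed
    have "(\<integral>\<^sup>+y. liminf (\<lambda>n. f n y) \<partial>F) \<le> liminf (\<lambda>n. \<integral>\<^sup>+y. f n y \<partial>F)"
      by (rule nn_integral_liminf) (rule fm)
    also have "\<dots> \<le> liminf (\<lambda>n. ennreal (tail (F \<star> F) (real n) / tail F (real n)))"
    proof (rule Liminf_mono)
      obtain N :: nat where "2 * real A < real N" using reals_Archimedean2 by blast
      then show "eventually (\<lambda>n. (\<integral>\<^sup>+y. f n y \<partial>F) \<le> ennreal (tail (F \<star> F) (real n) / tail F (real n))) sequentially"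
        unfolding eventually_sequentially by (intro exI[of _ N] allI impI le) auto
    qed
    also have "\<dots> = ennreal c"
    proof (rule lim_imp_Liminf)
      show "(\<lambda>n. ennreal (tail (F \<star> F) (real n) / tail F (real n))) \<longlonglongrightarrow> ennreal c"
        by (rule tendsto_ennrealI, rule filterlim_compose[OF rat filterlim_real_sequentially])
    qed simp
    also have "(\<integral>\<^sup>+y. liminf (\<lambda>n. f n y) \<partial>F) = (\<integral>\<^sup>+y. 2 * (indicator {..real A} y * ennreal (exp (g*y))) \<partial>F)"
      by (rule nn_integral_cong, rule lim_imp_Liminf) (auto intro: lim)
    also have "\<dots> = 2 * (\<integral>\<^sup>+y. indicator {..real A} y * ennreal (exp (g*y)) \<partial>F)"
      by (rule nn_integral_cmult) simp
    finally show ?thesis .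
  qed
  have "(\<lambda>A. \<integral>\<^sup>+y. indicator {..real A} y * ennreal (exp (g*y)) \<partial>F) \<longlonglongrightarrow> (\<integral>\<^sup>+y. ennreal (exp (g*y)) \<partial>F)"
  proof (rule nn_integral_LIMSEQ)
    show "incseq (\<lambda>A y. indicator {..real A} y * ennreal (exp (g*y)))"
      by (rule incseq_SucI, rule le_funI) (auto simp: indicator_def)
    fix y
    show "(\<lambda>A. indicator {..real A} y * ennreal (exp (g*y))) \<longlonglongrightarrow> ennreal (exp (g*y))"
    proof (rule tendsto_eventually)
      obtain N :: nat where "y \<le> real N" using real_arch_simple by blast
      then show "eventually (\<lambda>A. indicator {..real A} y * ennreal (exp (g*y)) = ennreal (exp (g*y))) sequentially"
        unfolding eventually_sequentially by (intro exI[of _ N] allI impI) (auto simp: indicator_def)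
    qed
  qed simp
  then have "(\<lambda>A. 2 * (\<integral>\<^sup>+y. indicator {..real A} y * ennreal (exp (g*y)) \<partial>F)) \<longlonglongrightarrow> 2 * mgf F g"
    unfolding mgf_def by (intro ennreal_tendsto_cmult) auto
  then show ?thesis by (rule LIMSEQ_le_const2) (use fA in auto)
qed

end

context setting
begin

interpretation F: prob_space F by (rule P)

lemma L_heavy:
  assumes g0: "g \<ge> 0" and L: "\<And>y. ((\<lambda>x. tail F (x + y) / tail F x) \<longlongrightarrow> exp (- g * y)) at_top"
    and s: "s > g"
  shows "mgf F s = \<infinity>"
proof (rule ccontr)
  assume "mgf F s \<noteq> \<infinity>"
  then obtain M where M: "mgf F s = ennreal M" "M \<ge> 0" by (cases "mgf F s") auto
  define \<delta> where "\<delta> = (s - g) / 2"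
  have \<delta>: "\<delta> > 0" using s by (simp add: \<delta>_def)
  have "exp (- g - \<delta>) < exp (- g * 1)" using \<delta> by simp
  from order_tendstoD(1)[OF L[of 1] this]
  obtain N0 where N0: "\<And>x. x \<ge> N0 \<Longrightarrow> exp (- g - \<delta>) < tail F (x + 1) / tail F x"
    by (auto simp: eventually_at_top_linorder)
  define N where "N = max N0 0"
  have stepN: "exp (- g - \<delta>) * tail F x \<le> tail F (x + 1)" if "x \<ge> N" for x
  proof -
    have "exp (- g - \<delta>) < tail F (x + 1) / tail F x" using N0[of x] that by (simp add: N_def)
    then show ?thesis using pos[rule_format, of x] by (simp add: field_simps)
  qed
  have geo: "exp (- (g + \<delta>) * real m) * tail F N \<le> tail F (N + real m)" for m :: nat
  proof (induction m)
    case 0 then show ?case by simp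
  next
    case (Suc m)
    have "exp (- (g + \<delta>) * real (Suc m)) * tail F N = exp (- g - \<delta>) * (exp (- (g + \<delta>) * real m) * tail F N)"
      by (simp add: algebra_simps exp_add[symmetric])
    also have "\<dots> \<le> exp (- g - \<delta>) * tail F (N + real m)" using Suc by simp
    also have "\<dots> \<le> tail F (N + real m + 1)" by (rule stepN) simp
    finally show ?case by (simp add: ac_simps)
  qed
  define K where "K = exp (s * N) * tail F N"
  have K: "K > 0" using pos by (simp add: K_def)
  have bnd: "K * exp (\<delta> * real m) \<le> M" for m :: nat
  proof -
    have "ennreal (exp (s * (N + real m)) * tail F (N + real m)) = (\<integral>\<^sup>+x. ennreal (exp (s * (N + real m))) * indicator {N + real m<..} x \<partial>F)"
      by (simp add: nn_integral_cmult tailF ennreal_mult pos less_imp_le)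
    also have "\<dots> \<le> mgf F s" unfolding mgf_def
    proof (rule nn_integral_mono)
      fix x
      show "ennreal (exp (s * (N + real m))) * indicator {N + real m<..} x \<le> ennreal (exp (s * x))"
        using s g0 by (auto simp: indicator_def intro!: ennreal_leI mult_left_mono)
    qed
    finally have "exp (s * (N + real m)) * tail F (N + real m) \<le> M" using M by (simp add: ennreal_le_iff)
    moreover have "K * exp (\<delta> * real m) \<le> exp (s * (N + real m)) * tail F (N + real m)"
    proof -
      have "K * exp (\<delta> * real m) = exp (s * (N + real m)) * (exp (- (g + \<delta>) * real m) * tail F N)"
        unfolding K_def \<delta>_def by (simp add: algebra_simps exp_add[symmetric])
      also have "\<dots> \<le> exp (s * (N + real m)) * tail F (N + real m)"
        using geo[of m] by (intro mult_left_mono) auto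
      finally show ?thesis .
    qed
    ultimately show ?thesis by linarith
  qed
  obtain m :: nat where m: "M / (K * \<delta>) < real m" using reals_Archimedean2 by blast
  have "1 + \<delta> * real m \<le> exp (\<delta> * real m)" by (rule exp_ge_add_one_self)
  then have "\<delta> * real m < exp (\<delta> * real m)" by linarith
  then have "K * (\<delta> * real m) < K * exp (\<delta> * real m)" using K by (rule mult_strict_left_mono)
  moreover have "M < K * (\<delta> * real m)" using m K \<delta> by (simp add: field_simps)
  ultimately show False using bnd[of m] by linarith
qed

lemma liminf_to_lim:
  assumes c: "\<forall>y::real. Liminf at_top (\<lambda>x. ereal (tail F (x - y) / tail F x)) \<ge> ereal (exp (g * y))"
  shows "((\<lambda>x. tail F (x + y) / tail F x) \<longlongrightarrow> exp (- g * y)) at_top"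
proof (rule order_tendstoI)
  fix a assume a: "a < exp (- g * y)"
  have "Liminf at_top (\<lambda>x. ereal (tail F (x - (-y)) / tail F x)) \<ge> ereal (exp (g * (-y)))" using c by blast
  moreover have "ereal a < ereal (exp (g * (-y)))" using a by simp
  ultimately have "eventually (\<lambda>x. ereal a < ereal (tail F (x - (-y)) / tail F x)) at_top"
    unfolding le_Liminf_iff by blast
  then show "eventually (\<lambda>x. a < tail F (x + y) / tail F x) at_top" by simp
next
  fix a assume a: "exp (- g * y) < a"
  have apos: "a > 0" using a by (meson exp_gt_zero less_trans)
  have "1 / a < exp (g * y)"
  proof -
    have "exp (- g * y) * exp (g * y) = 1" by (simp add: exp_add[symmetric])
    then show ?thesis using a apos by (simp add: field_simps) (metis exp_gt_zero mult_strict_right_mono mult.commute)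
  qed
  then have "ereal (1 / a) < ereal (exp (g * y))" by simp
  moreover have "Liminf at_top (\<lambda>x. ereal (tail F (x - y) / tail F x)) \<ge> ereal (exp (g * y))" using c by blast
  ultimately have "eventually (\<lambda>x. ereal (1 / a) < ereal (tail F (x - y) / tail F x)) at_top"
    unfolding le_Liminf_iff by blast
  then obtain N where N: "\<And>x. x \<ge> N \<Longrightarrow> 1 / a < tail F (x - y) / tail F x"
    by (auto simp: eventually_at_top_linorder)
  show "eventually (\<lambda>x. tail F (x + y) / tail F x < a) at_top"
    unfolding eventually_at_top_linorder
  proof (intro exI[of _ "N - y"] allI impI)
    fix x assume "x \<ge> N - y"
    then have "1 / a < tail F (x + y - y) / tail F (x + y)" using N[of "x + y"] by simp
    then have "1 / a < tail F x / tail F (x + y)" by simp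
    then show "tail F (x + y) / tail F x < a" using apos pos[rule_format, of x] pos[rule_format, of "x + y"]
      by (simp add: field_simps)
  qed
qed

end

theorem theorem7:
  fixes F :: "real measure" and \<gamma> :: real
  assumes "prob_space F"
    and "sets F = sets borel"
    and "emeasure F {..<0} = 0"
    and "\<forall>x. tail F x > 0"
    and "\<gamma> \<ge> 0"
  shows "class_S \<gamma> F \<longleftrightarrow>
           (ereal \<gamma> = gamma_hat F \<and>
            (\<exists>c::real. c \<ge> 2 \<and>
               (\<lambda>x. tail (F \<star> F) x) \<sim>[at_top] (\<lambda>x. c * tail F x)) \<and>
            (\<forall>y::real. Liminf at_top (\<lambda>x. ereal (tail F (x - y) / tail F x))
                         \<ge> ereal (exp (\<gamma> * y))))"
proof -
  interpret setting F by (rule setting.intro) (rule assms)+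
  interpret F: prob_space F by fact
  have g0: "\<gamma> \<ge> 0" by fact
  show ?thesis
  proof
    assume cs: "class_S \<gamma> F"
    then have fin: "mgf F \<gamma> < \<infinity>"
      and L: "\<And>y. ((\<lambda>x. tail F (x + y) / tail F x) \<longlongrightarrow> exp (- \<gamma> * y)) at_top"
      and eqv: "(\<lambda>x. tail (F \<star> F) x) \<sim>[at_top] (\<lambda>x. 2 * enn2real (mgf F \<gamma>) * tail F x)"
      by (auto simp: class_S_def)
    have a: "ereal \<gamma> = gamma_hat F"
      unfolding gamma_hat_def
    proof (rule antisym)
      show "ereal \<gamma> \<le> Sup {ereal \<gamma> | \<gamma>. mgf F \<gamma> < \<infinity>}"
        by (rule Sup_upper) (use fin in auto)
      show "Sup {ereal \<gamma> | \<gamma>. mgf F \<gamma> < \<infinity>} \<le> ereal \<gamma>"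
      proof (rule Sup_least)
        fix x assume "x \<in> {ereal \<gamma> | \<gamma>. mgf F \<gamma> < \<infinity>}"
        then obtain s where s: "x = ereal s" "mgf F s < \<infinity>" by auto
        have "s \<le> \<gamma>"
        proof (rule ccontr)
          assume "\<not> s \<le> \<gamma>"
          then have "mgf F s = \<infinity>" by (intro L_heavy[OF g0 L]) simp
          with s show False by simp
        qed
        then show "x \<le> ereal \<gamma>" using s by simp
      qed
    qed
    have "1 \<le> mgf F \<gamma>" by (rule mgf_ge1[OF g0])
    then have "enn2real 1 \<le> enn2real (mgf F \<gamma>)" using fin by (intro enn2real_mono) auto
    then have b: "2 * enn2real (mgf F \<gamma>) \<ge> 2" by simp
    have c: "Liminf at_top (\<lambda>x. ereal (tail F (x - y) / tail F x)) \<ge> ereal (exp (\<gamma> * y))" for y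
    proof -
      have "((\<lambda>x. tail F (x + - y) / tail F x) \<longlongrightarrow> exp (- \<gamma> * - y)) at_top" by (rule L)
      then have "((\<lambda>x. tail F (x - y) / tail F x) \<longlongrightarrow> exp (\<gamma> * y)) at_top" by simp
      then have "((\<lambda>x. ereal (tail F (x - y) / tail F x)) \<longlongrightarrow> ereal (exp (\<gamma> * y))) at_top"
        by (rule lim_ereal[THEN iffD2])
      then have "Liminf at_top (\<lambda>x. ereal (tail F (x - y) / tail F x)) = ereal (exp (\<gamma> * y))"
        by (rule lim_imp_Liminf[rotated]) simp
      then show ?thesis by simp
    qed
    show "ereal \<gamma> = gamma_hat F \<and>
            (\<exists>c::real. c \<ge> 2 \<and> (\<lambda>x. tail (F \<star> F) x) \<sim>[at_top] (\<lambda>x. c * tail F x)) \<and>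
            (\<forall>y::real. Liminf at_top (\<lambda>x. ereal (tail F (x - y) / tail F x)) \<ge> ereal (exp (\<gamma> * y)))"
    proof (intro conjI allI)
      show "ereal \<gamma> = gamma_hat F" by (rule a)
      show "\<exists>c::real. c \<ge> 2 \<and> (\<lambda>x. tail (F \<star> F) x) \<sim>[at_top] (\<lambda>x. c * tail F x)"
        by (rule exI[of _ "2 * enn2real (mgf F \<gamma>)"]) (rule conjI[OF b eqv])
      fix y show "Liminf at_top (\<lambda>x. ereal (tail F (x - y) / tail F x)) \<ge> ereal (exp (\<gamma> * y))" by (rule c)
    qed
  next
    assume "ereal \<gamma> = gamma_hat F \<and>
            (\<exists>c::real. c \<ge> 2 \<and> (\<lambda>x. tail (F \<star> F) x) \<sim>[at_top] (\<lambda>x. c * tail F x)) \<and>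
            (\<forall>y::real. Liminf at_top (\<lambda>x. ereal (tail F (x - y) / tail F x)) \<ge> ereal (exp (\<gamma> * y)))"
    then obtain c where gh: "gamma_hat F = ereal \<gamma>" and c: "c \<ge> 2"
      and eqv: "(\<lambda>x. tail (F \<star> F) x) \<sim>[at_top] (\<lambda>x. c * tail F x)"
      and cc: "\<forall>y::real. Liminf at_top (\<lambda>x. ereal (tail F (x - y) / tail F x)) \<ge> ereal (exp (\<gamma> * y))"
      by auto
    have L: "((\<lambda>x. tail F (x + y) / tail F x) \<longlongrightarrow> exp (- \<gamma> * y)) at_top" for y
      by (rule liminf_to_lim[OF cc])
    have rat: "((\<lambda>x. tail (F \<star> F) x / tail F x) \<longlongrightarrow> c) at_top"
    proof -
      have "((\<lambda>x. if tail (F \<star> F) x = 0 \<and> c * tail F x = 0 then 1 else tail (F \<star> F) x / (c * tail F x)) \<longlongrightarrow> 1) at_top"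
        by (rule asymp_equivD[OF eqv])
      moreover have "(if tail (F \<star> F) x = 0 \<and> c * tail F x = 0 then 1 else tail (F \<star> F) x / (c * tail F x))
          = tail (F \<star> F) x / (c * tail F x)" for x
        using c pos[rule_format, of x] by auto
      ultimately have "((\<lambda>x. tail (F \<star> F) x / (c * tail F x)) \<longlongrightarrow> 1) at_top" by simp
      then have "((\<lambda>x. c * (tail (F \<star> F) x / (c * tail F x))) \<longlongrightarrow> c * 1) at_top"
        by (rule tendsto_mult_left)
      moreover have "c * (tail (F \<star> F) x / (c * tail F x)) = tail (F \<star> F) x / tail F x" for x
        using c by simp
      ultimately show ?thesis by simp
    qed
    have ev1: "eventually (\<lambda>a. tail (F \<star> F) a \<le> (c + 1) * tail F a) at_top"
    proof -
      have "eventually (\<lambda>a. tail (F \<star> F) a / tail F a < c + 1) at_top"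
        by (rule order_tendstoD(2)[OF rat]) simp
      then show ?thesis
      proof eventually_elim
        case (elim a) then show ?case using pos[rule_format, of a] by (simp add: field_simps)
      qed
    qed
    have fin: "mgf F \<gamma> < \<infinity>" by (rule R1[OF gh g0 _ ev1]) (use c in simp)
    define p where "p = enn2real (mgf F \<gamma>)"
    have mp: "mgf F \<gamma> = ennreal p" using fin unfolding p_def by (simp add: less_top)
    have up: "c \<le> 2 * p"
    proof (rule ccontr)
      assume "\<not> c \<le> 2 * p"
      define c' where "c' = (c + 2 * p) / 2"
      have c'c: "c' < c" "2 * p < c'" using \<open>\<not> c \<le> 2 * p\<close> by (auto simp: c'_def)
      have "eventually (\<lambda>a. c' < tail (F \<star> F) a / tail F a) at_top"
        by (rule order_tendstoD(1)[OF rat c'c(1)])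
      then have "eventually (\<lambda>a. c' * tail F a \<le> tail (F \<star> F) a) at_top"
      proof eventually_elim
        case (elim a) then show ?case using pos[rule_format, of a] by (simp add: field_simps)
      qed
      moreover have "p \<ge> 0" unfolding p_def by simp
      ultimately have "c' \<le> 2 * p" using c'c c by (intro R2[OF gh g0 mp]) auto
      with c'c show False by simp
    qed
    have lo: "2 * p \<le> c"
    proof -
      have "2 * mgf F \<gamma> \<le> ennreal c" by (rule R3[OF g0 L rat])
      moreover have "ennreal (2 * p) = 2 * ennreal p" by (subst ennreal_mult') auto
      ultimately have "ennreal (2 * p) \<le> ennreal c" using mp by simp
      then show ?thesis using c by (subst (asm) ennreal_le_iff) auto
    qed
    have "c = 2 * enn2real (mgf F \<gamma>)" using up lo unfolding p_def by simp
    then have eqv': "(\<lambda>x. tail (F \<star> F) x) \<sim>[at_top] (\<lambda>x. 2 * enn2real (mgf F \<gamma>) * tail F x)"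
      using eqv by simp
    show "class_S \<gamma> F" unfolding class_S_def by (intro conjI allI fin L eqv')
  qed
qed

end
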